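(* Let $f(x)$ be a real polynomial of degree $3$ with three distinct real roots $x_1,x_2,x_3$, and let $k_1,k_2,k_3$ be the vertical lines $x=x_1$, $x=x_2$, $x=x_3$ in the coordinate plane. Then there exists an equilateral triangle $A_1A_2A_3$ with $A_i\in k_i$ for $i=1,2,3$. Moreover, for any such equilateral triangle, with inscribed circle $\omega$, the two vertical lines tangent to $\omega$ are exactly the lines $x=c$ where $c$ ranges over the two critical points (local extrema) of $f$, and the vertical line through the center of $\omega$ is the line $x=c_0$ where $c_0$ is the inflection point of $f$ (the root of $f''$).
   Context: Work in the real coordinate plane; "vertical" means parallel to the ordinate axis. *)

theory Defs
  imports "HOL-Analysis.Analysis" "HOL-Computational_Algebra.Polynomial"
begin

text \<open>Points of the real plane are pairs (x, y); dist on real \<times> real is Euclidean.\<close>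

type_synonym point = "real \<times> real"

definition vline :: "real \<Rightarrow> point set" where
  "vline c = {p. fst p = c}"

definition equilateral :: "point \<Rightarrow> point \<Rightarrow> point \<Rightarrow> bool" where
  "equilateral A B C \<longleftrightarrow> A \<noteq> B \<and> dist A B = dist B C \<and> dist B C = dist C A"

definition tri_area :: "point \<Rightarrow> point \<Rightarrow> point \<Rightarrow> real" where
  "tri_area A B C = \<bar>(fst B - fst A) * (snd C - snd A) - (fst C - fst A) * (snd B - snd A)\<bar> / 2"

definition incenter :: "point \<Rightarrow> point \<Rightarrow> point \<Rightarrow> point" where
  "incenter A B C = (1 / (dist B C + dist C A + dist A B)) *\<^sub>R
     (dist B C *\<^sub>R A + dist C A *\<^sub>R B + dist A B *\<^sub>R C)"

definition inradius :: "point \<Rightarrow> point \<Rightarrow> point \<Rightarrow> real" where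
  "inradius A B C = 2 * tri_area A B C / (dist B C + dist C A + dist A B)"

definition incircle :: "point \<Rightarrow> point \<Rightarrow> point \<Rightarrow> point set" where
  "incircle A B C = sphere (incenter A B C) (inradius A B C)"

definition tangent_line :: "point set \<Rightarrow> point set \<Rightarrow> bool" where
  "tangent_line L S \<longleftrightarrow> (\<exists>!p. p \<in> L \<and> p \<in> S)"

end

theory Submission imports Defs begin
lemma heron: fixes a b c d :: real
  shows "4*(a*d - c*b)^2 = 2*((a^2+b^2)*((a-c)^2+(b-d)^2) + ((a-c)^2+(b-d)^2)*(c^2+d^2) + (c^2+d^2)*(a^2+b^2)) - ((a^2+b^2)^2 + ((a-c)^2+(b-d)^2)^2 + (c^2+d^2)^2)"
  by algebra
lemma key: fixes a b c d L :: real
  assumes "L^2 = a^2+b^2" "L^2 = c^2+d^2" "L^2 = (a-c)^2+(b-d)^2" "L > 0"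
  shows "a^2 + c^2 - a*c = 3*L^2/4"
proof -
  define e where "e = c - a/2"
  define g where "g = d - b/2"
  have h1: "a*e + b*g = 0" using assms unfolding e_def g_def by (simp add: algebra_simps power2_eq_square)
  have h2: "e^2+g^2 = 3*(a^2+b^2)/4" using assms unfolding e_def g_def by (simp add: algebra_simps power2_eq_square)
  have "(a^2+b^2)*e^2 = b^2*(e^2+g^2)"
  proof -
    have "(a^2+b^2)*e^2 - b^2*(e^2+g^2) = (a*e-b*g)*(a*e+b*g)" by algebra
    then show ?thesis using h1 by simp
  qed
  then have "(a^2+b^2)*e^2 = (a^2+b^2)*(3*b^2/4)" using h2 by simp
  moreover have "a^2+b^2 \<noteq> 0" using assms by (metis less_numeral_extra(3) zero_less_power)
  ultimately have "e^2 = 3*b^2/4" by (metis mult_left_cancel)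
  then show ?thesis using assms unfolding e_def by (simp add: algebra_simps power2_eq_square)
qed
lemma cubic_repr:
  fixes f :: "real poly" assumes "degree f = 3"
  shows "f = [:coeff f 0, coeff f 1, coeff f 2, coeff f 3:]"
proof (rule poly_eqI)
  fix n show "coeff f n = coeff [:coeff f 0, coeff f 1, coeff f 2, coeff f 3:] n"
  proof -
    consider "n=0"|"n=1"|"n=2"|"n=3"|"n>3" by linarith
    then show ?thesis using coeff_eq_0[of f n] assms
      by cases (auto simp: coeff_pCons numeral_eq_Suc split: nat.split)
  qed
qed
lemma vs: fixes g :: "real \<times> real" and r c :: real assumes "r \<ge> 0"
  shows "(\<exists>!p. fst p = c \<and> p \<in> sphere g r) \<longleftrightarrow> (c - fst g)^2 = r^2"
proof -
  have mem: "fst p = c \<and> p \<in> sphere g r \<longleftrightarrow> fst p = c \<and> (c - fst g)^2 + (snd p - snd g)^2 = r^2" for p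
  proof -
    have "dist g p = sqrt ((c - fst g)^2 + (snd p - snd g)^2)" if "fst p = c"
      using that by (cases g; cases p) (simp add: dist_Pair_Pair dist_real_def power2_commute)
    then show ?thesis using assms by (auto simp: real_sqrt_eq_iff)
  qed
  show ?thesis
  proof
    assume u: "\<exists>!p. fst p = c \<and> p \<in> sphere g r"
    show "(c - fst g)^2 = r^2"
    proof (rule ccontr)
      assume ne: "(c - fst g)^2 \<noteq> r^2"
      from u obtain p where p: "fst p = c" "(c - fst g)^2 + (snd p - snd g)^2 = r^2" using mem by blast
      then have lt: "(c - fst g)^2 < r^2" using ne by (smt (verit) zero_le_power2)
      define t where "t = sqrt (r^2 - (c - fst g)^2)"
      have tp: "t > 0" using lt unfolding t_def by simp
      have tt: "t^2 = r^2 - (c - fst g)^2" using lt unfolding t_def by simp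
      have "fst (c, snd g + t) = c \<and> (c, snd g + t) \<in> sphere g r" using mem[of "(c, snd g + t)"] tt by simp
      moreover have "fst (c, snd g - t) = c \<and> (c, snd g - t) \<in> sphere g r" using mem[of "(c, snd g - t)"] tt by simp
      ultimately have "(c, snd g + t) = (c, snd g - t)" using u by blast
      then show False using tp by simp
    qed
  next
    assume h: "(c - fst g)^2 = r^2"
    show "\<exists>!p. fst p = c \<and> p \<in> sphere g r"
    proof
      show "fst (c, snd g) = c \<and> (c, snd g) \<in> sphere g r" using mem[of "(c, snd g)"] h by simp
    next
      fix p assume "fst p = c \<and> p \<in> sphere g r"
      then have "fst p = c" "(snd p - snd g)^2 = 0" using mem[of p] h by auto
      then show "p = (c, snd g)" by (cases p) simp
    qed
  qed
qed

theorem mainTheorem1: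
  fixes f :: "real poly" and x1 x2 x3 :: real
  assumes "degree f = 3"
    and "x1 \<noteq> x2" and "x1 \<noteq> x3" and "x2 \<noteq> x3"
    and "poly f x1 = 0" and "poly f x2 = 0" and "poly f x3 = 0"
  shows "(\<exists>A1 A2 A3. equilateral A1 A2 A3 \<and> A1 \<in> vline x1 \<and> A2 \<in> vline x2 \<and> A3 \<in> vline x3)
    \<and> (\<forall>A1 A2 A3. equilateral A1 A2 A3 \<and> A1 \<in> vline x1 \<and> A2 \<in> vline x2 \<and> A3 \<in> vline x3 \<longrightarrow>
          {c. tangent_line (vline c) (incircle A1 A2 A3)} = {c. poly (pderiv f) c = 0}
        \<and> {c. incenter A1 A2 A3 \<in> vline c} = {c. poly (pderiv (pderiv f)) c = 0})"
proof -
  define sm where "sm = x1+x2+x3"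
  define p where "p = x1*x2+x1*x3+x2*x3"
  define c0 where "c0 = coeff f 0"
  define c1 where "c1 = coeff f 1"
  define c2 where "c2 = coeff f 2"
  define c3 where "c3 = coeff f 3"
  have c3: "c3 \<noteq> 0" using assms(1) unfolding c3_def
  proof -
    have "f \<noteq> 0" using assms(1) by auto
    then have "coeff f (degree f) \<noteq> 0" by simp
    then show "coeff f 3 \<noteq> 0" using assms(1) by simp
  qed
  have frep: "f = [:c0,c1,c2,c3:]" using cubic_repr[OF assms(1)] unfolding c0_def c1_def c2_def c3_def .
  have P: "poly f x = c0 + c1*x + c2*x^2 + c3*x^3" for x
    by (subst frep) (simp add: algebra_simps power2_eq_square power3_eq_cube)
  have P1: "poly (pderiv f) x = c1 + 2*c2*x + 3*c3*x^2" for x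
    by (subst frep) (simp add: pderiv_pCons algebra_simps power2_eq_square)
  have P2: "poly (pderiv (pderiv f)) x = 2*c2 + 6*c3*x" for x
    by (subst frep) (simp add: pderiv_pCons algebra_simps)
  have q12: "c1 + c2*(x1+x2) + c3*(x1^2+x1*x2+x2^2) = 0"
  proof -
    have "(x1-x2)*(c1 + c2*(x1+x2) + c3*(x1^2+x1*x2+x2^2)) = poly f x1 - poly f x2"
      by (simp add: P algebra_simps power2_eq_square power3_eq_cube)
    then show ?thesis using assms by simp
  qed
  have q13: "c1 + c2*(x1+x3) + c3*(x1^2+x1*x3+x3^2) = 0"
  proof -
    have "(x1-x3)*(c1 + c2*(x1+x3) + c3*(x1^2+x1*x3+x3^2)) = poly f x1 - poly f x3"
      by (simp add: P algebra_simps power2_eq_square power3_eq_cube)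
    then show ?thesis using assms by simp
  qed
  have vc2: "c2 = - (c3 * sm)"
  proof -
    have "(x2-x3)*(c2 + c3 * sm) = (c1 + c2*(x1+x2) + c3*(x1^2+x1*x2+x2^2)) - (c1 + c2*(x1+x3) + c3*(x1^2+x1*x3+x3^2))"
      unfolding sm_def by (simp add: algebra_simps power2_eq_square)
    then have "(x2-x3)*(c2 + c3 * sm) = 0" using q12 q13 by simp
    then show ?thesis using assms by simp
  qed
  have vc1: "c1 = c3*p"
    using q12 vc2 unfolding sm_def p_def by (simp add: algebra_simps power2_eq_square)
  have D1: "poly (pderiv f) x = 3*c3*((x - sm/3)^2 - (sm^2-3*p)/9)" for x
    unfolding P1 vc1 vc2 by (simp add: field_simps power2_eq_square)
  have D2: "poly (pderiv (pderiv f)) x = 6*c3*(x - sm/3)" for x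
    unfolding P2 vc2 by (simp add: algebra_simps)
  show ?thesis
  proof
    define b where "b = ((x2-x1) - 2*(x3-x1))/sqrt 3"
    define d where "d = sqrt 3/2*(x2-x1) + b/2"
    have b': "x3 - x1 = (x2-x1)/2 - sqrt 3/2*b" unfolding b_def by (simp add: field_simps)
    have s3: "sqrt 3 ^2 = (3::real)" by simp
    have e1: "(x2-x1)^2 + b^2 = (x3-x1)^2 + d^2" unfolding b' d_def
      by (simp add: algebra_simps power2_eq_square) (simp add: s3[unfolded power2_eq_square] field_simps)
    have e2: "(x2-x1)^2 + b^2 = ((x3-x1)-(x2-x1))^2 + (d-b)^2" unfolding b' d_def
      by (simp add: algebra_simps power2_eq_square) (simp add: s3[unfolded power2_eq_square] field_simps)
    have "equilateral (x1,0) (x2,b) (x3,d)"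
      unfolding equilateral_def dist_Pair_Pair dist_real_def power2_abs
      using assms(2) e1 e2 by (simp add: power2_commute algebra_simps)
    then show "\<exists>A1 A2 A3. equilateral A1 A2 A3 \<and> A1 \<in> vline x1 \<and> A2 \<in> vline x2 \<and> A3 \<in> vline x3"
      unfolding vline_def by force
  next
    show "\<forall>A1 A2 A3. equilateral A1 A2 A3 \<and> A1 \<in> vline x1 \<and> A2 \<in> vline x2 \<and> A3 \<in> vline x3 \<longrightarrow>
          {c. tangent_line (vline c) (incircle A1 A2 A3)} = {c. poly (pderiv f) c = 0}
        \<and> {c. incenter A1 A2 A3 \<in> vline c} = {c. poly (pderiv (pderiv f)) c = 0}"
    proof (intro allI impI)
      fix A1 A2 A3 assume H: "equilateral A1 A2 A3 \<and> A1 \<in> vline x1 \<and> A2 \<in> vline x2 \<and> A3 \<in> vline x3"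
      obtain y1 y2 y3 where A: "A1 = (x1,y1)" "A2 = (x2,y2)" "A3 = (x3,y3)"
        using H unfolding vline_def by (metis mem_Collect_eq prod.collapse)
      define L where "L = dist A1 A2"
      have Ld: "dist A2 A3 = L" "dist A3 A1 = L" using H unfolding equilateral_def L_def by auto
      have Lpos: "L > 0" using H unfolding equilateral_def L_def by auto
      have dsq: "dist (u1,v1) (u2,v2) ^2 = (u2-u1)^2 + (v2-v1)^2" for u1 v1 u2 v2 :: real
        by (simp add: dist_Pair_Pair dist_real_def power2_commute)
      have L12: "L^2 = (x2-x1)^2 + (y2-y1)^2" using dsq L_def A by simp
      have L13: "L^2 = (x3-x1)^2 + (y3-y1)^2" using dsq[of x3 y3 x1 y1] Ld A
        by (simp add: power2_commute)
      have L23: "L^2 = ((x2-x1)-(x3-x1))^2 + ((y2-y1)-(y3-y1))^2" using dsq[of x2 y2 x3 y3] Ld A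
        by (simp add: power2_commute)
      have K: "(x2-x1)^2 + (x3-x1)^2 - (x2-x1)*(x3-x1) = 3*L^2/4"
        by (rule key[OF L12 L13 L23 Lpos])
      have sp: "(sm^2 - 3*p)/9 = L^2/12"
      proof -
        have "sm^2 - 3*p = (x2-x1)^2 + (x3-x1)^2 - (x2-x1)*(x3-x1)"
          unfolding sm_def p_def by (simp add: algebra_simps power2_eq_square)
        then show ?thesis using K by simp
      qed
      define cr where "cr = (x2-x1)*(y3-y1) - (x3-x1)*(y2-y1)"
      have H4: "4*cr^2 = 3*L^4"
      proof -
        have "4*cr^2 = 2*(L^2*L^2 + L^2*L^2 + L^2*L^2) - ((L^2)^2 + (L^2)^2 + (L^2)^2)"
          using heron[where a="x2-x1" and b="y2-y1" and c="x3-x1" and d="y3-y1", folded L12 L13 L23] unfolding cr_def by simp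
        then show ?thesis by (simp add: power2_eq_square power4_eq_xxxx)
      qed
      have inc: "incenter A1 A2 A3 = (sm/3, (y1+y2+y3)/3)"
        unfolding incenter_def Ld L_def[symmetric] using Lpos A unfolding sm_def
        by (simp add: field_simps)
      define r where "r = inradius A1 A2 A3"
      have r: "r = \<bar>cr\<bar>/(3*L)"
        unfolding r_def inradius_def tri_area_def Ld L_def[symmetric] using A unfolding cr_def
        by simp
      have rnn: "r \<ge> 0" using r Lpos by simp
      have r2: "r^2 = L^2/12"
      proof -
        have "r^2 = cr^2/(9*L^2)" unfolding r by (simp add: power_divide power_mult_distrib)
        also have "... = (3*L^4/4)/(9*L^2)" using H4 by (metis mult.commute nonzero_mult_div_cancel_left zero_neq_numeral) 
        also have "... = L^2/12" using Lpos by (simp add: field_simps power2_eq_square power4_eq_xxxx)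
        finally show ?thesis .
      qed
      have T: "{c. tangent_line (vline c) (incircle A1 A2 A3)} = {c. poly (pderiv f) c = 0}"
      proof (rule Collect_cong)
        fix c
        have "tangent_line (vline c) (incircle A1 A2 A3) \<longleftrightarrow> (c - sm/3)^2 = r^2"
          unfolding tangent_line_def incircle_def vline_def r_def[symmetric]
          using vs[OF rnn, of c "incenter A1 A2 A3"] inc by simp
        also have "... \<longleftrightarrow> poly (pderiv f) c = 0" unfolding D1 sp r2 using c3 by simp
        finally show "tangent_line (vline c) (incircle A1 A2 A3) \<longleftrightarrow> poly (pderiv f) c = 0" .
      qed
      have I: "{c. incenter A1 A2 A3 \<in> vline c} = {c. poly (pderiv (pderiv f)) c = 0}"
        unfolding inc vline_def D2 using c3 by auto
      show "{c. tangent_line (vline c) (incircle A1 A2 A3)} = {c. poly (pderiv f) c = 0}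
        \<and> {c. incenter A1 A2 A3 \<in> vline c} = {c. poly (pderiv (pderiv f)) c = 0}"
        using T I by simp
    qed
  qed
qed

end
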